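(* Let $B$ be a Noetherian ring of dimension $d$, let $(b_1,\ldots,b_n)\in\operatorname{Um}_n(B)$ with $n\ge2$, and let $y\in B$ satisfy $Bb_1+By=B$. Then for any finite family of prime ideals $\nu_1,\ldots,\nu_p\subset B$ there exist an element $b\in Bb_2+\cdots+Bb_n$ and an infinite sequence of natural numbers $c_1<c_2<\cdots$ such that $b_1+by^{c_j}\notin\nu_i$ for all $i=1,\ldots,p$ and all $j=1,2,\ldots$.
   Context: Rings are commutative with unit. $\operatorname{Um}_n(B)$ is the set of rows $(b_1,\ldots,b_n)\in B^n$ with $Bb_1+\cdots+Bb_n=B$. *)

theory Defs
  imports "HOL-Algebra.Ring_Divisibility"
begin

definition prime_chain :: "('a, 'b) ring_scheme \<Rightarrow> (nat \<Rightarrow> 'a set) \<Rightarrow> nat \<Rightarrow> bool" where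
  "prime_chain R P k \<longleftrightarrow> (\<forall>i\<le>k. primeideal (P i) R) \<and> (\<forall>i<k. P i \<subset> P (Suc i))"

definition krull_dim_eq :: "('a, 'b) ring_scheme \<Rightarrow> nat \<Rightarrow> bool" where
  "krull_dim_eq R d \<longleftrightarrow> (\<exists>P. prime_chain R P d) \<and> \<not> (\<exists>P. prime_chain R P (Suc d))"

definition unimodular_row :: "('a, 'b) ring_scheme \<Rightarrow> nat \<Rightarrow> (nat \<Rightarrow> 'a) \<Rightarrow> bool" where
  "unimodular_row R n b \<longleftrightarrow> b ` {1..n} \<subseteq> carrier R \<and> Idl\<^bsub>R\<^esub> (b ` {1..n}) = carrier R"

end

theory Submission
  imports Defs
begin

lemma add_mem_iff:
  fixes R (structure)
  assumes "ideal I R" "x \<in> carrier R" "z \<in> I"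
  shows "x \<oplus>\<^bsub>R\<^esub> z \<in> I \<longleftrightarrow> x \<in> I"
proof -
  interpret ideal I R by fact
  have zc: "z \<in> carrier R" using assms(3) by (rule Icarr)
  show ?thesis
  proof
    assume h: "x \<oplus> z \<in> I"
    have e: "(x \<oplus> z) \<oplus> (\<ominus> z) = x"
      using assms(2) zc by (metis a_assoc a_inv_closed r_neg r_zero)
    have "\<ominus> z \<in> I" using assms(3) by simp
    then have "(x \<oplus> z) \<oplus> (\<ominus> z) \<in> I" using h by simp
    then show "x \<in> I" using e by simp
  next
    assume "x \<in> I" thus "x \<oplus> z \<in> I" using assms(3) by simp
  qed
qed

lemma prime_notin_one:
  fixes R (structure)
  assumes "primeideal N R" shows "\<one> \<notin> N"
proof
  interpret primeideal N R by fact
  assume "\<one> \<in> N" then have "N = carrier R" by (rule one_imp_carrier)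
  thus False using I_notcarr by simp
qed

lemma prime_pow_notin:
  fixes R (structure)
  assumes "primeideal N R" "y \<in> carrier R" "y \<notin> N"
  shows "y [^] (c::nat) \<notin> N"
proof (induction c)
  case 0
  have "y [^] (0::nat) = \<one>" by (rule nat_pow_0)
  then show ?case using prime_notin_one[OF assms(1)] by simp
next
  case (Suc c)
  interpret primeideal N R by fact
  have yc: "y [^] c \<in> carrier R" using assms(2) by (rule nat_pow_closed)
  have "y [^] Suc c = y [^] c \<otimes> y" by (rule nat_pow_Suc)
  moreover have "y [^] c \<otimes> y \<notin> N"
  proof
    assume "y [^] c \<otimes> y \<in> N"
    then have "y [^] c \<in> N \<or> y \<in> N" using I_prime[OF yc assms(2)] by blast
    then show False using Suc.IH assms(3) by blast
  qed
  ultimately show ?case by simp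
qed

lemma avoid_t:
  fixes R (structure)
  assumes "primeideal N R" "finite G" "\<forall>\<mu>\<in>G. ideal \<mu> R \<and> \<not> \<mu> \<subseteq> N"
  shows "\<exists>t\<in>carrier R. t \<notin> N \<and> (\<forall>\<mu>\<in>G. t \<in> \<mu>)"
  using assms(2,3)
proof (induction G rule: finite_induct)
  case empty
  interpret primeideal N R by fact
  have "\<one> \<in> carrier R" by (rule one_closed)
  then show ?case using prime_notin_one[OF assms(1)] by blast
next
  case (insert m G)
  interpret primeideal N R by fact
  have hG: "\<forall>\<mu>\<in>G. ideal \<mu> R \<and> \<not> \<mu> \<subseteq> N" using insert.prems by blast
  obtain t where t: "t \<in> carrier R" "t \<notin> N" "\<forall>\<mu>\<in>G. t \<in> \<mu>" using insert.IH[OF hG] by blast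
  have im: "ideal m R" using insert.prems by blast
  have "\<not> m \<subseteq> N" using insert.prems by blast
  then obtain a where a: "a \<in> m" "a \<notin> N" by blast
  have ac: "a \<in> carrier R" using im a(1) by (rule ideal.Icarr)
  have c1: "a \<otimes> t \<in> carrier R" using ac t(1) by (rule m_closed)
  have c2: "a \<otimes> t \<notin> N"
  proof
    assume "a \<otimes> t \<in> N"
    then have "a \<in> N \<or> t \<in> N" using I_prime[OF ac t(1)] by blast
    then show False using a(2) t(2) by blast
  qed
  have c3: "a \<otimes> t \<in> m" using ideal.I_r_closed[OF im a(1) t(1)] .
  have c4: "\<forall>\<mu>\<in>G. a \<otimes> t \<in> \<mu>"
  proof
    fix \<mu> assume mG: "\<mu> \<in> G"
    have "ideal \<mu> R" using hG mG by blast
    then show "a \<otimes> t \<in> \<mu>" using t(3) mG ac by (meson ideal.I_l_closed)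
  qed
  show ?case using c1 c2 c3 c4 by blast
qed

lemma mixed:
  fixes R (structure)
  assumes "cring R" "finite F" "\<forall>\<mu>\<in>F. primeideal \<mu> R"
    "\<forall>\<mu>\<in>F. \<forall>\<mu>'\<in>F. \<mu> \<subseteq> \<mu>' \<longrightarrow> \<mu> = \<mu>'" "A \<subseteq> F" "ideal I R"
    "\<forall>\<mu>\<in>A. \<not> I \<subseteq> \<mu>"
  shows "\<exists>b\<in>I. (\<forall>\<mu>\<in>A. b \<notin> \<mu>) \<and> (\<forall>\<mu>\<in>F-A. b \<in> \<mu>)"
proof -
  have fA: "finite A" using assms(2,5) finite_subset by blast
  have "A \<subseteq> F \<longrightarrow> (\<forall>\<mu>\<in>A. \<not> I \<subseteq> \<mu>) \<longrightarrow> (\<exists>b\<in>I. (\<forall>\<mu>\<in>A. b \<notin> \<mu>) \<and> (\<forall>\<mu>\<in>F-A. b \<in> \<mu>))"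
    using fA
  proof (induction A rule: finite_induct)
    case empty
    interpret ideal I R by fact
    have "\<forall>\<mu>\<in>F. \<zero>\<^bsub>R\<^esub> \<in> \<mu>" using assms(3) additive_subgroup.zero_closed
      ideal.axioms(1) primeideal.axioms(1) by metis
    then show ?case by auto
  next
    case (insert \<nu> A)
    show ?case
    proof (intro impI)
      assume sub: "insert \<nu> A \<subseteq> F" and nI: "\<forall>\<mu>\<in>insert \<nu> A. \<not> I \<subseteq> \<mu>"
      obtain b where b: "b \<in> I" "\<forall>\<mu>\<in>A. b \<notin> \<mu>" "\<forall>\<mu>\<in>F-A. b \<in> \<mu>"
        using insert sub nI by auto
      have nuF: "\<nu> \<in> F" using sub by auto
      have pn: "primeideal \<nu> R" using assms(3) nuF by auto
      interpret I: ideal I R by fact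
      obtain e where e: "e \<in> I" "e \<notin> \<nu>" using nI by auto
      have ec: "e \<in> carrier R" using e I.Icarr by blast
      have bc: "b \<in> carrier R" using b I.Icarr by blast
      have "\<forall>\<mu>\<in>F-{\<nu>}. ideal \<mu> R \<and> \<not> \<mu> \<subseteq> \<nu>"
        using assms(3,4) nuF primeideal.axioms(1) by blast
      then obtain t where t: "t \<in> carrier R" "t \<notin> \<nu>" "\<forall>\<mu>\<in>F-{\<nu>}. t \<in> \<mu>"
        using avoid_t[OF pn] assms(2) by (meson finite_Diff)
      define b' where "b' = b \<oplus>\<^bsub>R\<^esub> e \<otimes>\<^bsub>R\<^esub> t"
      have etI: "e \<otimes>\<^bsub>R\<^esub> t \<in> I" using I.I_r_closed e t by blast
      have etc: "e \<otimes>\<^bsub>R\<^esub> t \<in> carrier R" using ec t by simp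
      have "b' \<in> I" unfolding b'_def using b etI by simp
      moreover have "\<forall>\<mu>\<in>insert \<nu> A. b' \<notin> \<mu>"
      proof
        fix \<mu> assume m: "\<mu> \<in> insert \<nu> A"
        show "b' \<notin> \<mu>"
        proof (cases "\<mu> = \<nu>")
          case True
          have bn: "b \<in> \<nu>" using b(3) nuF insert(2) by auto
          have "e \<otimes>\<^bsub>R\<^esub> t \<notin> \<nu>" using primeideal.I_prime[OF pn ec t(1)] e t by auto
          moreover have "b' = e \<otimes>\<^bsub>R\<^esub> t \<oplus>\<^bsub>R\<^esub> b" unfolding b'_def
            using I.a_comm bc etc by blast
          ultimately show ?thesis using add_mem_iff[OF primeideal.axioms(1)[OF pn] etc bn] True
            by simp
        next
          case False
          then have mA: "\<mu> \<in> A" "\<mu> \<in> F" using m sub by auto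
          have im: "ideal \<mu> R" using assms(3) mA primeideal.axioms(1) by blast
          have "e \<otimes>\<^bsub>R\<^esub> t \<in> \<mu>" using t(3) mA False ideal.I_l_closed[OF im _ ec] by blast
          then show ?thesis unfolding b'_def using add_mem_iff[OF im bc] b(2) mA by blast
        qed
      qed
      moreover have "\<forall>\<mu>\<in>F - insert \<nu> A. b' \<in> \<mu>"
      proof
        fix \<mu> assume mA: "\<mu> \<in> F - insert \<nu> A"
        have im: "ideal \<mu> R" using assms(3) mA primeideal.axioms(1) by blast
        have "e \<otimes>\<^bsub>R\<^esub> t \<in> \<mu>" using t(3) mA ideal.I_l_closed[OF im _ ec] by blast
        then show "b' \<in> \<mu>" unfolding b'_def using add_mem_iff[OF im bc] b(3) mA by blast
      qed
      ultimately show "\<exists>b\<in>I. (\<forall>\<mu>\<in>insert \<nu> A. b \<notin> \<mu>) \<and> (\<forall>\<mu>\<in>F - insert \<nu> A. b \<in> \<mu>)"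
        by blast
    qed
  qed
  then show ?thesis using assms(5,7) by blast
qed

lemma main_aux:
  fixes B :: "('a, 'm) ring_scheme" (structure) and d n p :: nat
    and b :: "nat \<Rightarrow> 'a" and y :: 'a and \<nu> :: "nat \<Rightarrow> 'a set"
  assumes "cring B" and "noetherian_ring B" and "krull_dim_eq B d"
    and "n \<ge> 2" and "unimodular_row B n b"
    and "y \<in> carrier B" and "Idl\<^bsub>B\<^esub> {b 1, y} = carrier B"
    and "\<forall>i\<in>{1..p}. primeideal (\<nu> i) B"
  shows "\<exists>bb \<in> Idl\<^bsub>B\<^esub> (b ` {2..n}). \<exists>c :: nat \<Rightarrow> nat. strict_mono c \<and>
           (\<forall>i\<in>{1..p}. \<forall>j. b 1 \<oplus>\<^bsub>B\<^esub> bb \<otimes>\<^bsub>B\<^esub> (y [^]\<^bsub>B\<^esub> c j) \<notin> \<nu> i)"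
proof -
  interpret cring B by fact
  define P where "P = \<nu> ` {1..p}"
  define M where "M = {\<mu>\<in>P. \<forall>\<mu>'\<in>P. \<mu> \<subseteq> \<mu>' \<longrightarrow> \<mu> = \<mu>'}"
  define J where "J = Idl (b ` {2..n})"
  have bcar: "b ` {1..n} \<subseteq> carrier B" using assms(5) unfolding unimodular_row_def by blast
  have b1: "b 1 \<in> carrier B" using bcar assms(4) by auto
  have Jc: "b ` {2..n} \<subseteq> carrier B" using bcar by auto
  have iJ: "ideal J B" unfolding J_def using genideal_ideal[OF Jc] .
  have fP: "finite P" unfolding P_def by simp
  have pP: "\<forall>\<mu>\<in>P. primeideal \<mu> B" using assms(8) unfolding P_def by blast
  have fM: "finite M" using fP unfolding M_def by simp
  have pM: "\<forall>\<mu>\<in>M. primeideal \<mu> B" using pP unfolding M_def by blast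
  have incM: "\<forall>\<mu>\<in>M. \<forall>\<mu>'\<in>M. \<mu> \<subseteq> \<mu>' \<longrightarrow> \<mu> = \<mu>'" unfolding M_def by blast
  define A where "A = {\<mu>\<in>M. b 1 \<in> \<mu>}"
  have nJ: "\<forall>\<mu>\<in>A. \<not> J \<subseteq> \<mu>"
  proof (intro ballI notI)
    fix \<mu> assume mA: "\<mu> \<in> A" and Jm: "J \<subseteq> \<mu>"
    have pm: "primeideal \<mu> B" using mA pM unfolding A_def by blast
    have im: "ideal \<mu> B" using pm primeideal.axioms(1) by blast
    have "b ` {2..n} \<subseteq> \<mu>" using Jm genideal_self[OF Jc] unfolding J_def by blast
    moreover have "b 1 \<in> \<mu>" using mA unfolding A_def by blast
    ultimately have "b ` {1..n} \<subseteq> \<mu>"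
    proof -
     show ?thesis proof
      fix x assume "x \<in> b ` {1..n}"
      then obtain i where i: "i \<in> {1..n}" "x = b i" by blast
      show "x \<in> \<mu>"
      proof (cases "i = 1")
        case True then show ?thesis using i \<open>b 1 \<in> \<mu>\<close> by simp
      next
        case False then have "i \<in> {2..n}" using i by auto
        then show ?thesis using i \<open>b ` {2..n} \<subseteq> \<mu>\<close> by blast
      qed
     qed
    qed
    then have "Idl (b ` {1..n}) \<subseteq> \<mu>" using genideal_minimal[OF im] by blast
    then have "carrier B \<subseteq> \<mu>" using assms(5) unfolding unimodular_row_def by simp
    then show False using primeideal.I_notcarr[OF pm] ideal.Icarr[OF im] by blast
  qed
  have AM: "A \<subseteq> M" unfolding A_def by blast
  have ex: "\<exists>bb\<in>J. (\<forall>\<mu>\<in>A. bb \<notin> \<mu>) \<and> (\<forall>\<mu>\<in>M-A. bb \<in> \<mu>)"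
    by (rule mixed[OF assms(1) fM pM incM AM iJ nJ])
  then obtain bb where bb1: "bb \<in> J" and bb23: "(\<forall>\<mu>\<in>A. bb \<notin> \<mu>) \<and> (\<forall>\<mu>\<in>M-A. bb \<in> \<mu>)"
    by (rule bexE)
  note bb = bb1 conjunct1[OF bb23] conjunct2[OF bb23]
  have bbc: "bb \<in> carrier B" using ideal.Icarr[OF iJ bb(1)] .
  have key: "b 1 \<oplus> bb \<otimes> (y [^] (j::nat)) \<notin> \<mu>" if mM: "\<mu> \<in> M" for \<mu> j
  proof -
    have pm: "primeideal \<mu> B" using mM pM by blast
    have im: "ideal \<mu> B" using pm primeideal.axioms(1) by blast
    have yc: "y [^] j \<in> carrier B" using assms(6) by simp
    have pc: "bb \<otimes> (y [^] j) \<in> carrier B" using bbc yc by simp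
    show ?thesis
    proof (cases "b 1 \<in> \<mu>")
      case True
      have "y \<notin> \<mu>"
      proof
        assume "y \<in> \<mu>"
        then have "{b 1, y} \<subseteq> \<mu>" using True by blast
        then have "carrier B \<subseteq> \<mu>" using genideal_minimal[OF im] assms(7) by blast
        then show False using primeideal.I_notcarr[OF pm] ideal.Icarr[OF im] by blast
      qed
      then have "y [^] j \<notin> \<mu>" by (rule prime_pow_notin[OF pm assms(6)])
      moreover have "bb \<notin> \<mu>" using bb(2) mM True unfolding A_def by blast
      ultimately have "bb \<otimes> (y [^] j) \<notin> \<mu>" using primeideal.I_prime[OF pm bbc yc] by auto
      moreover have "b 1 \<oplus> bb \<otimes> (y [^] j) = bb \<otimes> (y [^] j) \<oplus> b 1"
        using a_comm[OF b1 pc] .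
      ultimately show ?thesis using add_mem_iff[OF im pc True] by simp
    next
      case False
      have bm: "bb \<in> \<mu>" using bb(3) mM False unfolding A_def by blast
      have "bb \<otimes> (y [^] j) \<in> \<mu>" using ideal.I_r_closed[OF im bm yc] .
      then show ?thesis using add_mem_iff[OF im b1] False by blast
    qed
  qed
  have "\<forall>i\<in>{1..p}. \<forall>j::nat. b 1 \<oplus> bb \<otimes> (y [^] id j) \<notin> \<nu> i"
  proof (intro ballI allI)
    fix i and j :: nat assume ip: "i \<in> {1..p}"
    have ne: "{\<mu>\<in>P. \<nu> i \<subseteq> \<mu>} \<noteq> {}" using ip unfolding P_def by blast
    obtain m where m: "m \<in> {\<mu>\<in>P. \<nu> i \<subseteq> \<mu>}"
      "\<forall>x\<in>{\<mu>\<in>P. \<nu> i \<subseteq> \<mu>}. m \<le> x \<longrightarrow> m = x"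
      using finite_has_maximal[of "{\<mu>\<in>P. \<nu> i \<subseteq> \<mu>}"] ne fP by auto
    have "m \<in> M" using m unfolding M_def by auto
    then have "b 1 \<oplus> bb \<otimes> (y [^] j) \<notin> m" by (rule key)
    then show "b 1 \<oplus> bb \<otimes> (y [^] id j) \<notin> \<nu> i" using m by auto
  qed
  moreover have "strict_mono (id :: nat \<Rightarrow> nat)" by (simp add: strict_mono_def)
  ultimately show ?thesis using bb(1) unfolding J_def by blast
qed


theorem corollary7p2:
  fixes B :: "('a, 'm) ring_scheme" and d n p :: nat
    and b :: "nat \<Rightarrow> 'a" and y :: 'a and \<nu> :: "nat \<Rightarrow> 'a set"
  assumes "cring B" and "noetherian_ring B" and "krull_dim_eq B d"
    and "n \<ge> 2" and "unimodular_row B n b"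
    and "y \<in> carrier B" and "Idl\<^bsub>B\<^esub> {b 1, y} = carrier B"
    and "\<forall>i\<in>{1..p}. primeideal (\<nu> i) B"
  shows "\<exists>bb \<in> Idl\<^bsub>B\<^esub> (b ` {2..n}). \<exists>c :: nat \<Rightarrow> nat. strict_mono c \<and>
           (\<forall>i\<in>{1..p}. \<forall>j. b 1 \<oplus>\<^bsub>B\<^esub> bb \<otimes>\<^bsub>B\<^esub> (y [^]\<^bsub>B\<^esub> c j) \<notin> \<nu> i)"
  using main_aux[OF assms] .

end
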